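(* Let $\alpha>0$, $0<p<1$, and for $j=1,\dots,n$ let $(X_{j1},X_{j2})\sim BDEW(\alpha,p,\beta_{j1},\beta_{j2},\beta_{j3})$ with $\beta_{j1},\beta_{j2},\beta_{j3}>0$, the pairs $(X_{j1},X_{j2})$, $j=1,\dots,n$, being independent. Let $Z_1=\max\{X_{11},\dots,X_{n1}\}$ and $Z_2=\max\{X_{12},\dots,X_{n2}\}$. Then $$(Z_1,Z_2)\sim BDEW\Big(\alpha,p,\sum_{j=1}^n\beta_{j1},\sum_{j=1}^n\beta_{j2},\sum_{j=1}^n\beta_{j3}\Big).$$
   Context: The exponentiated discrete Weibull distribution $EDW(\alpha,p,\beta)$ ($\alpha,\beta>0$, $0<p<1$) is the distribution on $\mathbb{N}_0=\{0,1,2,\dots\}$ with cumulative distribution function $F_{EDW}(x;\alpha,p,\beta)=[1-p^{([x]+1)^{\alpha}}]^{\beta}$ for real $x\ge 0$, where $[x]$ is the largest integer $\le x$. The bivariate discrete exponentiated Weibull distribution $BDEW(\alpha,p,\beta_1,\beta_2,\beta_3)$ is the distribution of $(\max\{V_1,V_3\},\max\{V_2,V_3\})$ where $V_1,V_2,V_3$ are independent with $V_i\sim EDW(\alpha,p,\beta_i)$; equivalently it has joint CDF $F(x_1,x_2)=[1-p^{(x_1+1)^{\alpha}}]^{\beta_1}[1-p^{(x_2+1)^{\alpha}}]^{\beta_2}[1-p^{(\min\{x_1,x_2\}+1)^{\alpha}}]^{\beta_3}$ for $x_1,x_2\in\mathbb{N}_0$. *)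

theory Defs
  imports "HOL-Probability.Probability"
begin

definition edw_cdf :: "real \<Rightarrow> real \<Rightarrow> real \<Rightarrow> nat \<Rightarrow> real" where
  "edw_cdf \<alpha> p \<beta> x = (1 - p powr ((real x + 1) powr \<alpha>)) powr \<beta>"

definition bdew_cdf :: "real \<Rightarrow> real \<Rightarrow> real \<Rightarrow> real \<Rightarrow> real \<Rightarrow> nat \<Rightarrow> nat \<Rightarrow> real" where
  "bdew_cdf \<alpha> p \<beta>1 \<beta>2 \<beta>3 x1 x2 =
     edw_cdf \<alpha> p \<beta>1 x1 * edw_cdf \<alpha> p \<beta>2 x2 * edw_cdf \<alpha> p \<beta>3 (min x1 x2)"

text \<open>A random pair Y (with values in N_0 x N_0) on M has the BDEW distribution:
  it is a random variable and its joint CDF is the BDEW joint CDF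
  (a distribution on N_0^2 is determined by its joint CDF).\<close>
definition has_bdew ::
  "'a measure \<Rightarrow> ('a \<Rightarrow> nat \<times> nat) \<Rightarrow> real \<Rightarrow> real \<Rightarrow> real \<Rightarrow> real \<Rightarrow> real \<Rightarrow> bool" where
  "has_bdew M Y \<alpha> p \<beta>1 \<beta>2 \<beta>3 \<longleftrightarrow>
     Y \<in> measurable M (count_space UNIV) \<and>
     (\<forall>x1 x2. measure M {\<omega> \<in> space M. fst (Y \<omega>) \<le> x1 \<and> snd (Y \<omega>) \<le> x2}
                = bdew_cdf \<alpha> p \<beta>1 \<beta>2 \<beta>3 x1 x2)"

end

theory Submission
  imports Defs
begin

lemma edw_base_pos:
  assumes "\<alpha> > 0" "0 < p" "p < 1"
  shows "1 - p powr ((real x + 1) powr \<alpha>) \<noteq> (0::real)"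
proof -
  have t: "(real x + 1) powr \<alpha> > 0" by simp
  have "p powr ((real x + 1) powr \<alpha>) < 1 powr ((real x + 1) powr \<alpha>)"
    by (rule powr_less_mono2) (use t assms in auto)
  then show ?thesis by simp
qed

lemma edw_prod:
  assumes "\<alpha> > 0" "0 < p" "p < 1"
  shows "(\<Prod>j\<in>I. edw_cdf \<alpha> p (b j) x) = edw_cdf \<alpha> p (\<Sum>j\<in>I. b j) x"
  unfolding edw_cdf_def using powr_sum[OF edw_base_pos[OF assms], symmetric] by simp

theorem mainTheorem6:
  fixes M :: "'a measure" and X :: "nat \<Rightarrow> 'a \<Rightarrow> nat \<times> nat"
    and \<alpha> p :: real and \<beta>1 \<beta>2 \<beta>3 :: "nat \<Rightarrow> real" and n :: nat
  assumes "prob_space M"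
    and "n \<ge> 1"
    and "\<alpha> > 0" and "0 < p" and "p < 1"
    and "\<And>j. j \<in> {1..n} \<Longrightarrow> \<beta>1 j > 0 \<and> \<beta>2 j > 0 \<and> \<beta>3 j > 0"
    and "\<And>j. j \<in> {1..n} \<Longrightarrow> has_bdew M (X j) \<alpha> p (\<beta>1 j) (\<beta>2 j) (\<beta>3 j)"
    and "prob_space.indep_vars M (\<lambda>_. count_space UNIV) X {1..n}"
  shows "has_bdew M
           (\<lambda>\<omega>. (Max ((\<lambda>j. fst (X j \<omega>)) ` {1..n}), Max ((\<lambda>j. snd (X j \<omega>)) ` {1..n})))
           \<alpha> p (\<Sum>j=1..n. \<beta>1 j) (\<Sum>j=1..n. \<beta>2 j) (\<Sum>j=1..n. \<beta>3 j)"
proof -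
  interpret prob_space M by fact
  have meas[measurable]: "\<And>j. j \<in> {1..n} \<Longrightarrow> X j \<in> measurable M (count_space UNIV)"
    using assms(7) unfolding has_bdew_def by blast
  have ne: "{1..n} \<noteq> {}" "finite {1..n}" using assms(2) by auto
  have maxeq: "Max (f ` {1..n}) = a \<longleftrightarrow> (\<forall>j\<in>{1..n}. f j \<le> a) \<and> (\<exists>j\<in>{1..n}. f j = a)"
    for f :: "nat \<Rightarrow> nat" and a
    using ne by (auto simp: Max_eq_iff)
  have maxle: "Max (f ` {1..n}) \<le> a \<longleftrightarrow> (\<forall>j\<in>{1..n}. f j \<le> a)"
    for f :: "nat \<Rightarrow> nat" and a
    using ne by auto
  let ?Y = "\<lambda>\<omega>. (Max ((\<lambda>j. fst (X j \<omega>)) ` {1..n}), Max ((\<lambda>j. snd (X j \<omega>)) ` {1..n}))"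
  have "?Y \<in> measurable M (count_space UNIV)"
    unfolding measurable_count_space_eq2_countable
  proof (intro conjI ballI)
    show "?Y \<in> space M \<rightarrow> UNIV" by simp
    fix ab :: "nat \<times> nat"
    obtain a b where ab: "ab = (a, b)" by (cases ab)
    have "?Y -` {ab} \<inter> space M = {\<omega>\<in>space M. ((\<forall>j\<in>{1..n}. fst (X j \<omega>) \<le> a) \<and> (\<exists>j\<in>{1..n}. fst (X j \<omega>) = a))
       \<and> ((\<forall>j\<in>{1..n}. snd (X j \<omega>) \<le> b) \<and> (\<exists>j\<in>{1..n}. snd (X j \<omega>) = b))}"
    proof (rule set_eqI)
      fix \<omega>
      show "\<omega> \<in> ?Y -` {ab} \<inter> space M \<longleftrightarrow> \<omega> \<in> {\<omega>\<in>space M. ((\<forall>j\<in>{1..n}. fst (X j \<omega>) \<le> a) \<and> (\<exists>j\<in>{1..n}. fst (X j \<omega>) = a))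
       \<and> ((\<forall>j\<in>{1..n}. snd (X j \<omega>) \<le> b) \<and> (\<exists>j\<in>{1..n}. snd (X j \<omega>) = b))}"
        using maxeq[of "\<lambda>j. fst (X j \<omega>)" a] maxeq[of "\<lambda>j. snd (X j \<omega>)" b]
        unfolding ab vimage_def by (simp only: mem_Collect_eq Int_iff singleton_iff prod.inject image_comp o_def) blast
    qed
    also have "\<dots> \<in> sets M" by measurable
    finally show "?Y -` {ab} \<inter> space M \<in> sets M" .
  qed
  moreover have "measure M {\<omega> \<in> space M. fst (?Y \<omega>) \<le> x1 \<and> snd (?Y \<omega>) \<le> x2}
                = bdew_cdf \<alpha> p (\<Sum>j=1..n. \<beta>1 j) (\<Sum>j=1..n. \<beta>2 j) (\<Sum>j=1..n. \<beta>3 j) x1 x2" for x1 x2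
  proof -
    let ?A = "{ab :: nat \<times> nat. fst ab \<le> x1 \<and> snd ab \<le> x2}"
    have "{\<omega> \<in> space M. fst (?Y \<omega>) \<le> x1 \<and> snd (?Y \<omega>) \<le> x2} = (\<Inter>j\<in>{1..n}. X j -` ?A \<inter> space M)"
      using ne by (auto simp: maxle)
    moreover have "prob (\<Inter>j\<in>{1..n}. X j -` ?A \<inter> space M) = (\<Prod>j\<in>{1..n}. prob (X j -` ?A \<inter> space M))"
      by (rule indep_varsD_finite[OF assms(8) ne]) simp
    ultimately have "measure M {\<omega> \<in> space M. fst (?Y \<omega>) \<le> x1 \<and> snd (?Y \<omega>) \<le> x2}
       = (\<Prod>j\<in>{1..n}. prob (X j -` ?A \<inter> space M))"
      by simp
    also have "\<dots> = (\<Prod>j\<in>{1..n}. bdew_cdf \<alpha> p (\<beta>1 j) (\<beta>2 j) (\<beta>3 j) x1 x2)"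
    proof (rule prod.cong[OF refl])
      fix j assume j: "j \<in> {1..n}"
      have "X j -` ?A \<inter> space M = {\<omega> \<in> space M. fst (X j \<omega>) \<le> x1 \<and> snd (X j \<omega>) \<le> x2}" by auto
      then show "prob (X j -` ?A \<inter> space M) = bdew_cdf \<alpha> p (\<beta>1 j) (\<beta>2 j) (\<beta>3 j) x1 x2"
        using assms(7)[OF j] unfolding has_bdew_def by simp
    qed
    also have "\<dots> = bdew_cdf \<alpha> p (\<Sum>j=1..n. \<beta>1 j) (\<Sum>j=1..n. \<beta>2 j) (\<Sum>j=1..n. \<beta>3 j) x1 x2"
      unfolding bdew_cdf_def prod.distrib edw_prod[OF assms(3-5)] ..
    finally show ?thesis .
  qed
  ultimately show ?thesis unfolding has_bdew_def by blast
qed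

end
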